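(* Let $\mathcal F\subseteq 2^{[n]}\setminus\{\emptyset\}$ be a hypergraph which is connected on $[n]$, and let $\widehat{\mathcal F}$ be its building closure. Then $\mathcal F$ is tight if and only if for every $X\in\widehat{\mathcal F}\setminus\{[n]\}$: (1) $\mathcal F_X$ is connected as a hypergraph on $X$, and (2) $\mathcal F^X$ is connected as a hypergraph on $[n]\setminus X$. Moreover condition (1) holds automatically for every $X\in\widehat{\mathcal F}$.
   Context: A building set on $[n]$ is a family $\mathcal B$ of nonempty subsets of $[n]$ containing all singletons and such that $I,J\in\mathcal B$, $I\cap J\neq\emptyset$ imply $I\cup J\in\mathcal B$. The building closure $\widehat{\mathcal F}$ of a hypergraph $\mathcal F$ is the unique minimal building set containing $\mathcal F$. For $X\subseteq[n]$: $\mathcal F_X=\{F\in\mathcal F:F\subseteq X\}$ and $\mathcal F^X=\{F\setminus X: F\in\mathcal F, F\setminus X\neq\emptyset\}$. A hypergraph $\mathcal H$ on a vertex set $S$ is connected if for any $x,y\in S$ there is a sequence $x=z_1,\dots,z_k=y$ in $S$ with each $\{z_i,z_{i+1}\}$ contained in some member of $\mathcal H$. For $F\subseteq[n]$ let $\Delta_F=\mathrm{Conv}\{e_i:i\in F\}$ and $\Delta_{\mathcal F}=\sum_{F\in\mathcal F}\Delta_F$ (Minkowski sum). Writing $\phi_X(x)=\sum_{i\in X}x_i$, one has (known result) $\Delta_{\mathcal F}=\{x\in\mathbb{R}^n:\phi_{[n]}(x)=|\mathcal F|,\ \phi_X(x)\ge|\mathcal F_X| \text{ for all } X\in\widehat{\mathcal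 F}\}$. $\mathcal F$ is called tight (an irredundant basis of $\widehat{\mathcal F}$) if every inequality $\phi_X(x)\ge|\mathcal F_X|$, $X\in\widehat{\mathcal F}\setminus\{[n]\}$, in this description is irredundant (facet-defining). *)

theory Defs
  imports "HOL-Analysis.Analysis"
begin

text \<open>Ground set [n] is modelled as the universe of a finite type 'n; points of R^n are real^'n.\<close>

definition building_set :: "'n set set \<Rightarrow> bool" where
  "building_set B \<longleftrightarrow> {} \<notin> B \<and> (\<forall>i. {i} \<in> B) \<and>
     (\<forall>I\<in>B. \<forall>J\<in>B. I \<inter> J \<noteq> {} \<longrightarrow> I \<union> J \<in> B)"

definition building_closure :: "'n set set \<Rightarrow> 'n set set" where
  "building_closure F = \<Inter> {B. building_set B \<and> F \<subseteq> B}"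

definition restr :: "'n set set \<Rightarrow> 'n set \<Rightarrow> 'n set set" where
  "restr F X = {A \<in> F. A \<subseteq> X}"

definition contr :: "'n set set \<Rightarrow> 'n set \<Rightarrow> 'n set set" where
  "contr F X = {A - X | A. A \<in> F \<and> A - X \<noteq> {}}"

definition hconnected :: "'a set \<Rightarrow> 'a set set \<Rightarrow> bool" where
  "hconnected S H \<longleftrightarrow> (\<forall>x\<in>S. \<forall>y\<in>S.
     (\<lambda>a b. a \<in> S \<and> b \<in> S \<and> (\<exists>E\<in>H. a \<in> E \<and> b \<in> E))\<^sup>*\<^sup>* x y)"

definition simplex_of :: "'n::finite set \<Rightarrow> (real^'n) set" where
  "simplex_of A = convex hull {axis i 1 | i. i \<in> A}"

definition hpoly :: "'n::finite set set \<Rightarrow> (real^'n) set" where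
  "hpoly F = {(\<Sum>A\<in>F. p A) | p. \<forall>A\<in>F. p A \<in> simplex_of A}"

definition phi :: "'n::finite set \<Rightarrow> real^'n \<Rightarrow> real" where
  "phi X x = (\<Sum>i\<in>X. x $ i)"

definition tight :: "'n::finite set set \<Rightarrow> bool" where
  "tight F \<longleftrightarrow> (\<forall>X \<in> building_closure F - {UNIV}.
     {x \<in> hpoly F. phi X x = real (card (restr F X))} facet_of hpoly F)"

end

theory Submission
  imports Defs
begin

definition insimp :: "'n::finite set \<Rightarrow> real^'n \<Rightarrow> bool" where
  "insimp A p \<longleftrightarrow> (\<forall>i. 0 \<le> p$i) \<and> (\<forall>i. i \<notin> A \<longrightarrow> p$i = 0) \<and> phi UNIV p = 1"

definition wv :: "'n::finite set \<Rightarrow> real^'n" where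
  "wv C = (\<chi> i. if i \<in> C then 1 else 0)"

lemma phi_inner: "phi C x = wv C \<bullet> x"
proof -
  have "wv C \<bullet> x = (\<Sum>i\<in>UNIV. if i \<in> C then x$i else 0)"
    unfolding wv_def inner_vec_def by (rule sum.cong) auto
  also have "\<dots> = phi C x" unfolding phi_def by (simp add: sum.If_cases)
  finally show ?thesis by simp
qed

lemma phi_add: "phi C (x + y) = phi C x + phi C y"
  by (simp add: phi_def sum.distrib)
lemma phi_diff: "phi C (x - y) = phi C x - phi C y"
  by (simp add: phi_def sum_subtractf)
lemma phi_scale: "phi C (c *\<^sub>R x) = c * phi C x"
  by (simp add: phi_def sum_distrib_left)
lemma phi_sum: "phi C (sum f S) = (\<Sum>A\<in>S. phi C (f A))"
  unfolding phi_def by (simp add: sum.swap[of _ C] ) 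
lemma phi_axis: "phi C (axis i 1) = (if i \<in> C then 1 else 0)"
  by (simp add: phi_def axis_def)
lemma phi_zero: "phi C 0 = 0" by (simp add: phi_def)
lemma phi_split: "phi UNIV x = phi X x + phi (- X) x"
  unfolding phi_def
  by (metis Compl_eq_Diff_UNIV finite sum.subset_diff top_greatest add.commute)

lemma simplex_insimp: fixes p :: "real^'n::finite" shows "p \<in> simplex_of A \<Longrightarrow> insimp A p"
proof -
  let ?T = "{x::real^'n. (\<forall>i. 0 \<le> x$i) \<and> (\<forall>i. i \<notin> A \<longrightarrow> x$i = 0) \<and> phi UNIV x = 1}"
  have cv: "convex ?T"
  proof (rule convexI)
    fix x y :: "real^'n" and u v :: real
    assume x: "x \<in> ?T" and y: "y \<in> ?T" and "0 \<le> u" "0 \<le> v" "u + v = 1"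
    note uv = this
    show "u *\<^sub>R x + v *\<^sub>R y \<in> ?T"
      using x y uv by (simp add: phi_add phi_scale)
  qed
  have "{axis i 1 | i. i \<in> A} \<subseteq> ?T"
    using phi_axis[of UNIV] by (auto simp: axis_def)
  then have "simplex_of A \<subseteq> ?T"
    unfolding simplex_of_def using cv by (simp add: hull_minimal)
  moreover assume "p \<in> simplex_of A"
  ultimately show ?thesis unfolding insimp_def by blast
qed

lemma axis_simplex: "i \<in> A \<Longrightarrow> axis i 1 \<in> simplex_of A"
  unfolding simplex_of_def by (rule hull_inc) auto

lemma insimp_sub: assumes "insimp A p" "A \<subseteq> C" shows "phi C p = 1"
proof -
  have "phi (- C) p = 0" using assms unfolding insimp_def phi_def
    by (auto intro!: sum.neutral)
  then show ?thesis using assms phi_split[of p C] unfolding insimp_def by simp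
qed

lemma insimp_disj: assumes "insimp A p" "A \<inter> C = {}" shows "phi C p = 0"
  using assms unfolding insimp_def phi_def by (auto intro!: sum.neutral)

lemma insimp_nonneg: "insimp A p \<Longrightarrow> phi C p \<ge> 0"
  unfolding insimp_def phi_def by (auto intro!: sum_nonneg)

lemma insimp_diff: assumes "insimp A p" "phi X p = 0" shows "insimp (A - X) p"
proof -
  have "\<forall>i\<in>X. p$i = 0" using assms unfolding insimp_def phi_def
    by (subst sum_nonneg_eq_0_iff[symmetric]) auto
  then show ?thesis using assms unfolding insimp_def by auto
qed


lemma sum_in_hpoly: "(\<And>A. A \<in> F \<Longrightarrow> p A \<in> simplex_of A) \<Longrightarrow> sum p F \<in> hpoly F"
  unfolding hpoly_def by blast

lemma convex_hpoly: "convex (hpoly F)"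
proof (rule convexI)
  fix x y :: "real^'a" and u v :: real
  assume x: "x \<in> hpoly F" and y: "y \<in> hpoly F" and uv: "0 \<le> u" "0 \<le> v" "u + v = 1"
  obtain p where p: "\<forall>A\<in>F. p A \<in> simplex_of A" "x = sum p F" using x unfolding hpoly_def by blast
  obtain q where q: "\<forall>A\<in>F. q A \<in> simplex_of A" "y = sum q F" using y unfolding hpoly_def by blast
  have "u *\<^sub>R x + v *\<^sub>R y = (\<Sum>A\<in>F. u *\<^sub>R p A + v *\<^sub>R q A)"
    by (simp add: p q scaleR_sum_right sum.distrib)
  moreover have "(\<Sum>A\<in>F. u *\<^sub>R p A + v *\<^sub>R q A) \<in> hpoly F"
  proof (rule sum_in_hpoly)
    fix A assume "A \<in> F"
    then show "u *\<^sub>R p A + v *\<^sub>R q A \<in> simplex_of A"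
      using p q uv convexD[OF convex_convex_hull] unfolding simplex_of_def by blast
  qed
  ultimately show "u *\<^sub>R x + v *\<^sub>R y \<in> hpoly F" by simp
qed

lemma hpoly_phi_split:
  fixes F :: "'n::finite set set"
  assumes "\<And>A. A \<in> F \<Longrightarrow> p A \<in> simplex_of A"
  shows "phi X (sum p F) = real (card (restr F X)) + (\<Sum>A\<in>F - restr F X. phi X (p A))"
proof -
  have "phi X (sum p F) = (\<Sum>A\<in>F. phi X (p A))" by (rule phi_sum)
  also have "\<dots> = (\<Sum>A\<in>F - restr F X. phi X (p A)) + (\<Sum>A\<in>restr F X. phi X (p A))"
    by (rule sum.subset_diff) (auto simp: restr_def)
  also have "(\<Sum>A\<in>restr F X. phi X (p A)) = (\<Sum>A\<in>restr F X. 1)"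
    by (rule sum.cong) (auto simp: restr_def intro!: insimp_sub simplex_insimp assms)
  finally show ?thesis by simp
qed

lemma hpoly_ge:
  fixes F :: "'n::finite set set"
  assumes "x \<in> hpoly F" shows "phi X x \<ge> real (card (restr F X))"
proof -
  obtain p where p: "\<forall>A\<in>F. p A \<in> simplex_of A" "x = sum p F" using assms unfolding hpoly_def by blast
  have "(\<Sum>A\<in>F - restr F X. phi X (p A)) \<ge> 0"
    using p by (auto intro!: sum_nonneg insimp_nonneg simplex_insimp)
  then show ?thesis using hpoly_phi_split[of F p X] p by simp
qed

lemma hpoly_UNIV:
  fixes F :: "'n::finite set set"
  assumes "x \<in> hpoly F" shows "phi UNIV x = real (card F)"
proof -
  obtain p where p: "\<forall>A\<in>F. p A \<in> simplex_of A" "x = sum p F" using assms unfolding hpoly_def by blast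
  have "restr F UNIV = F" by (auto simp: restr_def)
  then show ?thesis using hpoly_phi_split[of F p UNIV] p by simp
qed

lemma face_char:
  fixes F :: "'n::finite set set"
  shows "(x \<in> hpoly F \<and> phi X x = real (card (restr F X))) \<longleftrightarrow>
    (\<exists>p. (\<forall>A\<in>F. p A \<in> simplex_of A \<and> (\<not> A \<subseteq> X \<longrightarrow> phi X (p A) = 0)) \<and> x = sum p F)"
proof
  assume h: "x \<in> hpoly F \<and> phi X x = real (card (restr F X))"
  obtain p where p: "\<forall>A\<in>F. p A \<in> simplex_of A" "x = sum p F" using h unfolding hpoly_def by blast
  have s0: "(\<Sum>A\<in>F - restr F X. phi X (p A)) = 0"
    using hpoly_phi_split[of F p X] p h by simp
  have "\<forall>A\<in>F - restr F X. phi X (p A) = 0"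
    using s0 p by (subst sum_nonneg_eq_0_iff[symmetric]) (auto intro!: insimp_nonneg simplex_insimp)
  then show "\<exists>p. (\<forall>A\<in>F. p A \<in> simplex_of A \<and> (\<not> A \<subseteq> X \<longrightarrow> phi X (p A) = 0)) \<and> x = sum p F"
    using p by (auto simp: restr_def)
next
  assume "\<exists>p. (\<forall>A\<in>F. p A \<in> simplex_of A \<and> (\<not> A \<subseteq> X \<longrightarrow> phi X (p A) = 0)) \<and> x = sum p F"
  then obtain p where p: "\<forall>A\<in>F. p A \<in> simplex_of A \<and> (\<not> A \<subseteq> X \<longrightarrow> phi X (p A) = 0)" "x = sum p F" by blast
  have "(\<Sum>A\<in>F - restr F X. phi X (p A)) = 0"
    using p(1) by (auto simp: restr_def intro!: sum.neutral)
  moreover have "sum p F \<in> hpoly F" using p(1) by (intro sum_in_hpoly) blast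
  moreover have "phi X (sum p F) = real (card (restr F X)) + (\<Sum>A\<in>F - restr F X. phi X (p A))"
    using p(1) by (intro hpoly_phi_split) blast
  ultimately show "x \<in> hpoly F \<and> phi X x = real (card (restr F X))"
    using p(2) by simp
qed

lemma face_face:
  fixes F :: "'n::finite set set"
  shows "{x \<in> hpoly F. phi X x = real (card (restr F X))} face_of hpoly F"
proof -
  have "hpoly F \<inter> {x. wv X \<bullet> x = real (card (restr F X))} face_of hpoly F"
    by (rule face_of_Int_supporting_hyperplane_ge) (auto simp: convex_hpoly hpoly_ge phi_inner[symmetric])
  moreover have "hpoly F \<inter> {x. wv X \<bullet> x = real (card (restr F X))} = {x \<in> hpoly F. phi X x = real (card (restr F X))}"
    by (auto simp: phi_inner)
  ultimately show ?thesis by simp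
qed

lemma rel_closure:
  fixes S :: "(real^'n::finite) set"
  assumes "subspace S" "\<And>a b. R a b \<Longrightarrow> axis a 1 - axis b 1 \<in> S" "R\<^sup>*\<^sup>* x y"
  shows "axis x 1 - axis y 1 \<in> S"
  using assms(3)
proof (induction rule: rtranclp_induct)
  case base then show ?case using subspace_0[OF assms(1)] by simp
next
  case (step y z)
  have "axis x 1 - axis z 1 = (axis x 1 - axis y 1) + (axis y 1 - axis z (1::real))" by simp
  moreover have "(axis x 1 - axis y 1) + (axis y 1 - axis z (1::real)) \<in> S"
    by (rule subspace_add[OF assms(1) step.IH assms(2)[OF step.hyps(2)]])
  ultimately show ?case by simp
qed

lemma sum_split_compl: "sum f (UNIV::'n::finite set) = sum f X + sum f (- X)"
  using sum.subset_diff[of X UNIV f] by (simp add: Compl_eq_Diff_UNIV add.commute)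

lemma vec_expand: "(v::real^'n::finite) = (\<Sum>i\<in>UNIV. v$i *\<^sub>R axis i 1)"
proof -
  have "(\<Sum>x\<in>UNIV. v $ x * (if i = x then 1 else 0)) = (\<Sum>x\<in>UNIV. if x = i then v$x else 0)" for i
    by (rule sum.cong) auto
  then show ?thesis by (simp add: vec_eq_iff sum_component axis_def)
qed

lemma block:
  fixes S :: "(real^'n::finite) set"
  assumes "subspace S" "i0 \<in> B" "\<forall>i\<in>B. axis i 1 - axis i0 1 \<in> S" "phi B v = 0"
  shows "(\<Sum>i\<in>B. v$i *\<^sub>R axis i 1) \<in> S"
proof -
  have "(\<Sum>i\<in>B. v$i *\<^sub>R axis i 1) = (\<Sum>i\<in>B. v$i *\<^sub>R (axis i 1 - axis i0 1)) + (\<Sum>i\<in>B. v$i) *\<^sub>R axis i0 1"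
    by (simp add: scaleR_diff_right sum_subtractf scaleR_sum_left)
  also have "(\<Sum>i\<in>B. v$i) = 0" using assms(4) by (simp add: phi_def)
  finally have e: "(\<Sum>i\<in>B. v$i *\<^sub>R axis i 1) = (\<Sum>i\<in>B. v$i *\<^sub>R (axis i 1 - axis i0 1))" by simp
  show ?thesis unfolding e
    by (rule subspace_sum[OF assms(1)]) (use assms(1,3) subspace_scale in blast)
qed

definition Dset :: "(real^'n::finite) set \<Rightarrow> real^'n \<Rightarrow> (real^'n) set" where
  "Dset T a = (\<lambda>x. x - a) ` (affine hull T)"

lemma D_subspace: "a \<in> T \<Longrightarrow> subspace (Dset T a)"
  unfolding Dset_def by (rule affine_diffs_subspace_subtract) (auto intro: hull_inc)

lemma D_diff: assumes "a \<in> T" "y1 \<in> T" "y2 \<in> T" shows "y1 - y2 \<in> Dset T a"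
proof -
  have "y1 - a \<in> Dset T a" "y2 - a \<in> Dset T a" using assms unfolding Dset_def by (auto intro: hull_inc)
  then have "(y1 - a) - (y2 - a) \<in> Dset T a" using subspace_diff D_subspace assms(1) by blast
  then show ?thesis by simp
qed

lemma D_back: "v \<in> Dset T a \<Longrightarrow> a + v \<in> affine hull T"
  unfolding Dset_def by auto

lemma lower1:
  fixes T :: "(real^'n::finite) set"
  assumes "a \<in> T" "\<And>i j. axis i 1 - axis j 1 \<in> Dset T a"
  shows "{y. phi UNIV y = phi UNIV a} \<subseteq> affine hull T"
proof
  fix y :: "real^'n" assume "y \<in> {y. phi UNIV y = phi UNIV a}"
  then have v0: "phi UNIV (y - a) = 0" by (simp add: phi_diff)
  have "(\<Sum>i\<in>UNIV. (y - a)$i *\<^sub>R axis i 1) \<in> Dset T a"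
    by (rule block[OF D_subspace[OF assms(1)] UNIV_I]) (use assms(2) v0 in auto)
  then have "y - a \<in> Dset T a" using vec_expand[of "y - a"] by simp
  from D_back[OF this] show "y \<in> affine hull T" by simp
qed

lemma lower2:
  fixes T :: "(real^'n::finite) set"
  assumes "a \<in> T" "i0 \<in> X" "j0 \<in> - X"
    "\<forall>i\<in>X. axis i 1 - axis i0 1 \<in> Dset T a" "\<forall>i\<in>-X. axis i 1 - axis j0 1 \<in> Dset T a"
  shows "{y. phi X y = phi X a} \<inter> {y. phi (- X) y = phi (- X) a} \<subseteq> affine hull T"
proof
  fix y :: "real^'n" assume "y \<in> {y. phi X y = phi X a} \<inter> {y. phi (- X) y = phi (- X) a}"
  then have v0: "phi X (y - a) = 0" "phi (- X) (y - a) = 0" by (auto simp: phi_diff)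
  have "(\<Sum>i\<in>X. (y - a)$i *\<^sub>R axis i 1) \<in> Dset T a"
    by (rule block[OF D_subspace[OF assms(1)] assms(2) assms(4) v0(1)])
  moreover have "(\<Sum>i\<in>-X. (y - a)$i *\<^sub>R axis i 1) \<in> Dset T a"
    by (rule block[OF D_subspace[OF assms(1)] assms(3) assms(5) v0(2)])
  ultimately have "(\<Sum>i\<in>X. (y - a)$i *\<^sub>R axis i 1) + (\<Sum>i\<in>-X. (y - a)$i *\<^sub>R axis i 1) \<in> Dset T a"
    using subspace_add D_subspace assms(1) by blast
  moreover have "y - a = (\<Sum>i\<in>X. (y - a)$i *\<^sub>R axis i 1) + (\<Sum>i\<in>-X. (y - a)$i *\<^sub>R axis i 1)"
    by (rule trans[OF vec_expand[of "y - a"] sum_split_compl])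
  ultimately have "y - a \<in> Dset T a" by simp
  from D_back[OF this] show "y \<in> affine hull T" by simp
qed

lemma affine_hp: "affine {z. phi C z = b}"
  by (simp add: phi_inner affine_hyperplane)

lemma hstep:
  fixes S :: "(real^'n::finite) set"
  assumes "affine S" "x \<in> S" "phi C x = b" "y \<in> S" "phi C y \<noteq> b"
  shows "aff_dim (S \<inter> {z. phi C z = b}) = aff_dim S - 1"
  using aff_dim_affine_Int_hyperplane[OF assms(1), of "wv C" b] assms
  unfolding phi_inner by auto

lemma hstep_le:
  fixes S :: "(real^'n::finite) set"
  assumes "affine S" "y \<in> S" "phi C y \<noteq> b"
  shows "aff_dim (S \<inter> {z. phi C z = b}) \<le> aff_dim S - 1"
proof -
  have "aff_dim S \<ge> 0" by (metis aff_dim_negative_iff assms(2) empty_iff not_less)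
  then show ?thesis
    using aff_dim_affine_Int_hyperplane[OF assms(1), of "wv C" b] assms
    unfolding phi_inner by auto
qed

lemma phi_axis_scale: "phi C (c *\<^sub>R axis i 1) = (if i \<in> C then c else 0)"
  by (simp add: phi_scale phi_axis)

lemma aff1: "aff_dim {y::real^'n::finite. phi UNIV y = c} = int DIM(real^'n) - 1"
proof -
  fix k :: 'n
  have "aff_dim (UNIV \<inter> {y::real^'n. phi UNIV y = c}) = aff_dim (UNIV::(real^'n) set) - 1"
    by (rule hstep[where x = "c *\<^sub>R axis k 1" and y = "(c+1) *\<^sub>R axis k 1"])
       (auto simp: phi_axis_scale)
  then show ?thesis by simp
qed

lemma aff2:
  fixes X :: "'n::finite set"
  assumes "i0 \<in> X" "j0 \<notin> X"
  shows "aff_dim ({y::real^'n. phi X y = c1} \<inter> {y. phi (- X) y = c2}) = int DIM(real^'n) - 2"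
proof -
  have 1: "aff_dim (UNIV \<inter> {y::real^'n. phi X y = c1}) = aff_dim (UNIV::(real^'n) set) - 1"
    by (rule hstep[where x = "c1 *\<^sub>R axis i0 1" and y = "(c1+1) *\<^sub>R axis i0 1"])
       (use assms in \<open>auto simp: phi_axis_scale\<close>)
  have 2: "aff_dim ((UNIV \<inter> {y::real^'n. phi X y = c1}) \<inter> {y. phi (- X) y = c2})
      = aff_dim (UNIV \<inter> {y::real^'n. phi X y = c1}) - 1"
    by (rule hstep[where x = "c1 *\<^sub>R axis i0 1 + c2 *\<^sub>R axis j0 1" and y = "c1 *\<^sub>R axis i0 1 + (c2+1) *\<^sub>R axis j0 1"])
       (use assms in \<open>auto simp: phi_axis_scale phi_add affine_hp\<close>)
  show ?thesis using 1 2 by simp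
qed

lemma aff3:
  fixes C1 C2 C3 :: "'n::finite set"
  assumes "k1 \<in> C1" "k2 \<in> C2" "k3 \<in> C3" "C1 \<inter> C2 = {}" "C1 \<inter> C3 = {}" "C2 \<inter> C3 = {}"
  shows "aff_dim ({y::real^'n. phi C1 y = b1} \<inter> {y. phi C2 y = b2} \<inter> {y. phi C3 y = b3}) \<le> int DIM(real^'n) - 3"
proof -
  have d: "k1 \<notin> C2" "k1 \<notin> C3" "k2 \<notin> C1" "k2 \<notin> C3" "k3 \<notin> C1" "k3 \<notin> C2" using assms by auto
  have 1: "aff_dim (UNIV \<inter> {y::real^'n. phi C1 y = b1}) \<le> aff_dim (UNIV::(real^'n) set) - 1"
    by (rule hstep_le[where y = "(b1+1) *\<^sub>R axis k1 1"])
       (use assms d in \<open>auto simp: phi_axis_scale\<close>)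
  have 2: "aff_dim ((UNIV \<inter> {y::real^'n. phi C1 y = b1}) \<inter> {y. phi C2 y = b2})
      \<le> aff_dim (UNIV \<inter> {y::real^'n. phi C1 y = b1}) - 1"
    by (rule hstep_le[where y = "b1 *\<^sub>R axis k1 1 + (b2+1) *\<^sub>R axis k2 1"])
       (use assms d in \<open>auto simp: phi_axis_scale phi_add affine_hp\<close>)
  have 3: "aff_dim (((UNIV \<inter> {y::real^'n. phi C1 y = b1}) \<inter> {y. phi C2 y = b2}) \<inter> {y. phi C3 y = b3})
      \<le> aff_dim ((UNIV \<inter> {y::real^'n. phi C1 y = b1}) \<inter> {y. phi C2 y = b2}) - 1"
    by (rule hstep_le[where y = "b1 *\<^sub>R axis k1 1 + b2 *\<^sub>R axis k2 1 + (b3+1) *\<^sub>R axis k3 1"])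
       (use assms d in \<open>auto simp: phi_axis_scale phi_add affine_hp affine_Int\<close>)
  show ?thesis using 1 2 3 by simp
qed

abbreviation fc :: "'n::finite set set \<Rightarrow> 'n set \<Rightarrow> (real^'n) set" where
  "fc F X \<equiv> {x \<in> hpoly F. phi X x = real (card (restr F X))}"

lemma building_mono: "building_set B \<Longrightarrow> F \<subseteq> B \<Longrightarrow> building_closure F \<subseteq> B"
  unfolding building_closure_def by blast

lemma bset_nonempty:
  assumes "{} \<notin> F" "X \<in> building_closure F" shows "X \<noteq> {}"
proof -
  have "building_set {X. X \<noteq> {}}" unfolding building_set_def by auto
  moreover have "F \<subseteq> {X. X \<noteq> {}}" using assms(1) by auto
  ultimately show ?thesis using building_mono assms(2) by blast
qed

lemma hc_single: "hconnected {i} H"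
  unfolding hconnected_def by auto

lemma hc_self: "A \<in> F \<Longrightarrow> hconnected A (restr F A)"
  unfolding hconnected_def restr_def
  by (intro ballI r_into_rtranclp) auto

lemma hc_union:
  assumes I: "hconnected I (restr F I)" and J: "hconnected J (restr F J)" and z: "z \<in> I" "z \<in> J"
  shows "hconnected (I \<union> J) (restr F (I \<union> J))"
proof -
  let ?R = "\<lambda>S a b. a \<in> S \<and> b \<in> S \<and> (\<exists>E\<in>restr F S. a \<in> E \<and> b \<in> E)"
  have mI: "?R I \<le> ?R (I \<union> J)" "?R J \<le> ?R (I \<union> J)" unfolding restr_def by auto
  have lift: "(?R (I \<union> J))\<^sup>*\<^sup>* x y" if "x \<in> S" "y \<in> S" "hconnected S (restr F S)" "?R S \<le> ?R (I \<union> J)" for x y S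
  proof -
    have "(?R S)\<^sup>*\<^sup>* x y" using that unfolding hconnected_def by blast
    then show ?thesis using rtranclp_mono[OF that(4)] by blast
  qed
  show ?thesis unfolding hconnected_def
  proof (intro ballI)
    fix x y assume x: "x \<in> I \<union> J" and y: "y \<in> I \<union> J"
    have "(?R (I \<union> J))\<^sup>*\<^sup>* x z" using x lift[OF _ z(1) I mI(1)] lift[OF _ z(2) J mI(2)] by blast
    moreover have "(?R (I \<union> J))\<^sup>*\<^sup>* z y" using y lift[OF z(1) _ I mI(1)] lift[OF z(2) _ J mI(2)] by blast
    ultimately show "(?R (I \<union> J))\<^sup>*\<^sup>* x y" by (rule rtranclp_trans)
  qed
qed

lemma closure_conn:
  assumes "{} \<notin> F" "X \<in> building_closure F" shows "hconnected X (restr F X)"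
proof -
  let ?B = "{X. X \<noteq> {} \<and> hconnected X (restr F X)}"
  have b1: "{} \<notin> ?B" by simp
  have b2: "\<forall>i. {i} \<in> ?B"
  proof
    fix i show "{i} \<in> ?B" using hc_single[of i "restr F {i}"] by simp
  qed
  have b3: "\<forall>I\<in>?B. \<forall>J\<in>?B. I \<inter> J \<noteq> {} \<longrightarrow> I \<union> J \<in> ?B"
  proof (intro ballI impI)
    fix I J assume I: "I \<in> ?B" and J: "J \<in> ?B" and IJ: "I \<inter> J \<noteq> {}"
    then obtain z where z: "z \<in> I" "z \<in> J" by blast
    have "hconnected (I \<union> J) (restr F (I \<union> J))"
      using hc_union[of I F J z] I J z by simp
    then show "I \<union> J \<in> ?B" using z by blast
  qed
  have "building_set ?B" unfolding building_set_def by (rule conjI[OF b1 conjI[OF b2 b3]])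
  moreover have "F \<subseteq> ?B" using assms(1) hc_self by blast
  ultimately show ?thesis using building_mono assms(2) by blast
qed

lemma disc_part:
  assumes "\<not> hconnected S H"
  shows "\<exists>C. C \<subseteq> S \<and> C \<noteq> {} \<and> S - C \<noteq> {} \<and> (\<forall>E\<in>H. E \<subseteq> S \<longrightarrow> E \<subseteq> C \<or> E \<inter> C = {})"
proof -
  let ?R = "\<lambda>a b. a \<in> S \<and> b \<in> S \<and> (\<exists>E\<in>H. a \<in> E \<and> b \<in> E)"
  obtain x y where xy: "x \<in> S" "y \<in> S" "\<not> ?R\<^sup>*\<^sup>* x y" using assms unfolding hconnected_def by blast
  let ?C = "{z \<in> S. ?R\<^sup>*\<^sup>* x z}"
  have "\<forall>E\<in>H. E \<subseteq> S \<longrightarrow> E \<subseteq> ?C \<or> E \<inter> ?C = {}"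
  proof (intro ballI impI)
    fix E assume E: "E \<in> H" "E \<subseteq> S"
    show "E \<subseteq> ?C \<or> E \<inter> ?C = {}"
    proof (cases "E \<inter> ?C = {}")
      case False
      then obtain a where a: "a \<in> E" "a \<in> S" "?R\<^sup>*\<^sup>* x a" by blast
      have "b \<in> ?C" if "b \<in> E" for b
      proof -
        have "?R a b" using a that E by blast
        then show ?thesis using a(3) that E by (auto intro: rtranclp.rtrancl_into_rtrancl)
      qed
      then show ?thesis by blast
    qed simp
  qed
  moreover have "x \<in> ?C" "y \<in> S - ?C" using xy by auto
  ultimately show ?thesis by (intro exI[of _ ?C]) blast
qed

lemma const_in:
  fixes F :: "'n::finite set set"
  assumes z: "z \<in> fc F X" and CX: "C \<subseteq> X" and P: "\<forall>A\<in>F. A \<subseteq> X \<longrightarrow> A \<subseteq> C \<or> A \<inter> C = {}"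
  shows "phi C z = (\<Sum>A\<in>F. if A \<subseteq> C then 1 else 0)"
proof -
  obtain p where p: "\<forall>A\<in>F. p A \<in> simplex_of A \<and> (\<not> A \<subseteq> X \<longrightarrow> phi X (p A) = 0)" "z = sum p F"
    using z face_char[of z F X] by blast
  have "phi C z = (\<Sum>A\<in>F. phi C (p A))" using p(2) phi_sum by simp
  also have "\<dots> = (\<Sum>A\<in>F. if A \<subseteq> C then 1 else 0)"
  proof (rule sum.cong)
    fix A assume A: "A \<in> F"
    have ins: "insimp A (p A)" using p A simplex_insimp by blast
    show "phi C (p A) = (if A \<subseteq> C then 1 else 0)"
    proof (cases "A \<subseteq> X")
      case True
      show ?thesis
      proof (cases "A \<subseteq> C")
        case True2: True
        show ?thesis using insimp_sub[OF ins True2] True2 by simp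
      next
        case False2: False
        then have "A \<inter> C = {}" using P A True by blast
        then show ?thesis using insimp_disj[OF ins] False2 by simp
      qed
    next
      case False
      then have i2: "insimp (A - X) (p A)" using insimp_diff ins p A by blast
      have "(A - X) \<inter> C = {}" using CX by blast
      moreover have "\<not> A \<subseteq> C" using False CX by blast
      ultimately show ?thesis using insimp_disj[OF i2] by simp
    qed
  qed simp
  finally show ?thesis .
qed

lemma const_out:
  fixes F :: "'n::finite set set"
  assumes z: "z \<in> fc F X" and CX: "C \<subseteq> - X" and P: "\<forall>A\<in>F. \<not> A \<subseteq> X \<longrightarrow> A - X \<subseteq> C \<or> (A - X) \<inter> C = {}"
  shows "phi C z = (\<Sum>A\<in>F. if \<not> A \<subseteq> X \<and> A - X \<subseteq> C then 1 else 0)"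
proof -
  obtain p where p: "\<forall>A\<in>F. p A \<in> simplex_of A \<and> (\<not> A \<subseteq> X \<longrightarrow> phi X (p A) = 0)" "z = sum p F"
    using z face_char[of z F X] by blast
  have "phi C z = (\<Sum>A\<in>F. phi C (p A))" using p(2) phi_sum by simp
  also have "\<dots> = (\<Sum>A\<in>F. if \<not> A \<subseteq> X \<and> A - X \<subseteq> C then 1 else 0)"
  proof (rule sum.cong)
    fix A assume A: "A \<in> F"
    have ins: "insimp A (p A)" using p A simplex_insimp by blast
    show "phi C (p A) = (if \<not> A \<subseteq> X \<and> A - X \<subseteq> C then 1 else 0)"
    proof (cases "A \<subseteq> X")
      case True
      then have "A \<inter> C = {}" using CX by blast
      then show ?thesis using True insimp_disj[OF ins] by simp
    next
      case False
      then have i2: "insimp (A - X) (p A)" using insimp_diff ins p A by blast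
      show ?thesis
      proof (cases "A - X \<subseteq> C")
        case True2: True
        show ?thesis using insimp_sub[OF i2 True2] True2 False by simp
      next
        case False2: False
        then have "(A - X) \<inter> C = {}" using P A False by blast
        then show ?thesis using insimp_disj[OF i2] False2 by simp
      qed
    qed
  qed simp
  finally show ?thesis .
qed

lemma const_cX:
  fixes F :: "'n::finite set set"
  assumes z: "z \<in> fc F X"
  shows "phi (- X) z = real (card F) - real (card (restr F X))"
  using z hpoly_UNIV[of z F] phi_split[of z X] by simp

lemma T5:
  fixes F :: "'n::finite set set"
  assumes X: "X \<noteq> {}" "X \<noteq> UNIV"
    and nc: "\<not> (hconnected X (restr F X) \<and> hconnected (- X) (contr F X))"
  shows "aff_dim (fc F X) \<le> int DIM(real^'n) - 3"
proof -
  obtain k3 where k3: "k3 \<in> - X" using X(2) by blast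
  show ?thesis
  proof (cases "hconnected X (restr F X)")
    case False
    obtain C where C: "C \<subseteq> X" "C \<noteq> {}" "X - C \<noteq> {}" "\<forall>E\<in>restr F X. E \<subseteq> X \<longrightarrow> E \<subseteq> C \<or> E \<inter> C = {}"
      using disc_part[OF False] by blast
    have P1: "\<forall>A\<in>F. A \<subseteq> X \<longrightarrow> A \<subseteq> C \<or> A \<inter> C = {}" using C(4) unfolding restr_def by blast
    have P2: "\<forall>A\<in>F. A \<subseteq> X \<longrightarrow> A \<subseteq> X - C \<or> A \<inter> (X - C) = {}" using P1 by blast
    obtain k1 k2 where k: "k1 \<in> C" "k2 \<in> X - C" using C by blast
    have XC: "X - C \<subseteq> X" by blast
    have s1: "fc F X \<subseteq> {y. phi C y = (\<Sum>A\<in>F. if A \<subseteq> C then 1 else 0)} \<inter>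
        {y. phi (X - C) y = (\<Sum>A\<in>F. if A \<subseteq> X - C then 1 else 0)} \<inter>
        {y. phi (- X) y = real (card F) - real (card (restr F X))}"
    proof (rule subsetI)
      fix z assume z: "z \<in> fc F X"
      show "z \<in> {y. phi C y = (\<Sum>A\<in>F. if A \<subseteq> C then 1 else 0)} \<inter>
        {y. phi (X - C) y = (\<Sum>A\<in>F. if A \<subseteq> X - C then 1 else 0)} \<inter>
        {y. phi (- X) y = real (card F) - real (card (restr F X))}"
        using const_in[OF z C(1) P1] const_in[OF z XC P2] const_cX[OF z] by simp
    qed
    have s2: "aff_dim ({y. phi C y = (\<Sum>A\<in>F. if A \<subseteq> C then 1 else 0)} \<inter>
        {y. phi (X - C) y = (\<Sum>A\<in>F. if A \<subseteq> X - C then 1 else 0)} \<inter>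
        {y::real^'n. phi (- X) y = real (card F) - real (card (restr F X))}) \<le> int DIM(real^'n) - 3"
      by (rule aff3[OF k k3]) (use C(1) in auto)
    show ?thesis by (rule order_trans[OF aff_dim_subset[OF s1] s2])
  next
    case True
    then have False': "\<not> hconnected (- X) (contr F X)" using nc by blast
    obtain D where D: "D \<subseteq> - X" "D \<noteq> {}" "- X - D \<noteq> {}" "\<forall>E\<in>contr F X. E \<subseteq> - X \<longrightarrow> E \<subseteq> D \<or> E \<inter> D = {}"
      using disc_part[OF False'] by blast
    have P1: "\<forall>A\<in>F. \<not> A \<subseteq> X \<longrightarrow> A - X \<subseteq> D \<or> (A - X) \<inter> D = {}"
    proof (intro ballI impI)
      fix A assume "A \<in> F" "\<not> A \<subseteq> X"
      then have "A - X \<in> contr F X" unfolding contr_def by blast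
      then show "A - X \<subseteq> D \<or> (A - X) \<inter> D = {}" using D(4) by blast
    qed
    have P2: "\<forall>A\<in>F. \<not> A \<subseteq> X \<longrightarrow> A - X \<subseteq> - X - D \<or> (A - X) \<inter> (- X - D) = {}" using P1 by blast
    obtain k1 k2 k3 where k: "k1 \<in> X" "k2 \<in> D" "k3 \<in> - X - D" using D X by blast
    have XD: "- X - D \<subseteq> - X" by blast
    have s1: "fc F X \<subseteq> {y. phi X y = real (card (restr F X))} \<inter>
        {y. phi D y = (\<Sum>A\<in>F. if \<not> A \<subseteq> X \<and> A - X \<subseteq> D then 1 else 0)} \<inter>
        {y. phi (- X - D) y = (\<Sum>A\<in>F. if \<not> A \<subseteq> X \<and> A - X \<subseteq> - X - D then 1 else 0)}"
    proof (rule subsetI)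
      fix z assume z: "z \<in> fc F X"
      show "z \<in> {y. phi X y = real (card (restr F X))} \<inter>
        {y. phi D y = (\<Sum>A\<in>F. if \<not> A \<subseteq> X \<and> A - X \<subseteq> D then 1 else 0)} \<inter>
        {y. phi (- X - D) y = (\<Sum>A\<in>F. if \<not> A \<subseteq> X \<and> A - X \<subseteq> - X - D then 1 else 0)}"
        using const_out[OF z D(1) P1] const_out[OF z XD P2] z by simp
    qed
    have s2: "aff_dim ({y. phi X y = real (card (restr F X))} \<inter>
        {y. phi D y = (\<Sum>A\<in>F. if \<not> A \<subseteq> X \<and> A - X \<subseteq> D then 1 else 0)} \<inter>
        {y::real^'n. phi (- X - D) y = (\<Sum>A\<in>F. if \<not> A \<subseteq> X \<and> A - X \<subseteq> - X - D then 1 else 0)}) \<le> int DIM(real^'n) - 3"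
      by (rule aff3[OF k]) (use D(1) in auto)
    show ?thesis by (rule order_trans[OF aff_dim_subset[OF s1] s2])
  qed
qed

lemma mp_diff_gen:
  fixes F :: "'n::finite set set" and q :: "'n set \<Rightarrow> real^'n"
  assumes "E \<in> F"
  shows "sum (\<lambda>B. if B = E then u else q B) F - sum (\<lambda>B. if B = E then w else q B) F = u - w"
proof -
  have r: "sum (\<lambda>B. if B = E then v else q B) F = v + sum q (F - {E})" for v
  proof -
    have "sum (\<lambda>B. if B = E then v else q B) F = v + sum (\<lambda>B. if B = E then v else q B) (F - {E})"
      using sum.remove[OF finite assms, of "\<lambda>B. if B = E then v else q B"] by simp
    also have "sum (\<lambda>B. if B = E then v else q B) (F - {E}) = sum q (F - {E})"
      by (rule sum.cong) auto
    finally show ?thesis .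
  qed
  show ?thesis unfolding r by simp
qed

lemma T4:
  fixes F :: "'n::finite set set"
  assumes ne: "{} \<notin> F" and X: "i0 \<in> X" "j0 \<notin> X"
    and c1: "hconnected X (restr F X)" and c2: "hconnected (- X) (contr F X)"
  shows "aff_dim (fc F X) = int DIM(real^'n) - 2 \<and> fc F X \<noteq> {}"
proof -
  define c where "c A = (if A \<subseteq> X then (SOME i. i \<in> A) else (SOME i. i \<in> A - X))" for A
  have cA: "c A \<in> A \<and> (\<not> A \<subseteq> X \<longrightarrow> c A \<notin> X)" if "A \<in> F" for A
  proof (cases "A \<subseteq> X")
    case True
    have "\<exists>i. i \<in> A" using that ne by (metis ex_in_conv)
    then show ?thesis using someI_ex[of "\<lambda>i. i \<in> A"] True by (simp add: c_def)
  next
    case False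
    then have "\<exists>i. i \<in> A - X" by blast
    then show ?thesis using someI_ex[of "\<lambda>i. i \<in> A - X"] False by (simp add: c_def)
  qed
  define q where "q A = axis (c A) (1::real)" for A
  let ?T = "fc F X"
  have mp_in: "sum (\<lambda>B. if B = E then axis i 1 else q B) F \<in> ?T"
    if "E \<in> F" "i \<in> E" "\<not> E \<subseteq> X \<longrightarrow> i \<notin> X" for E i
  proof -
    have "\<exists>p. (\<forall>A\<in>F. p A \<in> simplex_of A \<and> (\<not> A \<subseteq> X \<longrightarrow> phi X (p A) = 0)) \<and>
        sum (\<lambda>B. if B = E then axis i 1 else q B) F = sum p F"
      by (intro exI[of _ "\<lambda>B. if B = E then axis i 1 else q B"])
         (use that cA in \<open>auto simp: q_def axis_simplex phi_axis\<close>)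
    then show ?thesis using face_char by blast
  qed
  have a_in: "sum q F \<in> ?T"
  proof -
    have "\<exists>p. (\<forall>A\<in>F. p A \<in> simplex_of A \<and> (\<not> A \<subseteq> X \<longrightarrow> phi X (p A) = 0)) \<and> sum q F = sum p F"
      by (intro exI[of _ q]) (use cA in \<open>auto simp: q_def axis_simplex phi_axis\<close>)
    then show ?thesis using face_char by blast
  qed
  let ?a = "sum q F"
  have sub: "subspace (Dset ?T ?a)" by (rule D_subspace[OF a_in])
  have gen: "axis a 1 - axis b 1 \<in> Dset ?T ?a"
    if "E \<in> F" "a \<in> E" "b \<in> E" "\<not> E \<subseteq> X \<longrightarrow> a \<notin> X \<and> b \<notin> X" for E a b
    using D_diff[OF a_in mp_in[of E a] mp_in[of E b]] mp_diff_gen[OF that(1), of "axis a 1" q "axis b 1"] that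
    by simp
  have RX: "axis a 1 - axis b 1 \<in> Dset ?T ?a"
    if "a \<in> X \<and> b \<in> X \<and> (\<exists>E\<in>restr F X. a \<in> E \<and> b \<in> E)" for a b
    using that gen unfolding restr_def by blast
  have RC: "axis a 1 - axis b 1 \<in> Dset ?T ?a"
    if h: "a \<in> - X \<and> b \<in> - X \<and> (\<exists>E\<in>contr F X. a \<in> E \<and> b \<in> E)" for a b
  proof -
    obtain A where A: "A \<in> F" "a \<in> A - X" "b \<in> A - X" using h unfolding contr_def by blast
    then show ?thesis using gen[of A a b] by blast
  qed
  have inX: "\<forall>i\<in>X. axis i 1 - axis i0 1 \<in> Dset ?T ?a"
  proof
    fix i assume "i \<in> X"
    then have hh: "(\<lambda>a b. a \<in> X \<and> b \<in> X \<and> (\<exists>E\<in>restr F X. a \<in> E \<and> b \<in> E))\<^sup>*\<^sup>* i i0"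
      using c1 X(1) unfolding hconnected_def by blast
    show "axis i 1 - axis i0 1 \<in> Dset ?T ?a" by (rule rel_closure[where R="\<lambda>a b. a \<in> X \<and> b \<in> X \<and> (\<exists>E\<in>restr F X. a \<in> E \<and> b \<in> E)", OF sub RX hh])
  qed
  have inC: "\<forall>i\<in>-X. axis i 1 - axis j0 1 \<in> Dset ?T ?a"
  proof
    fix i assume "i \<in> - X"
    then have hh: "(\<lambda>a b. a \<in> - X \<and> b \<in> - X \<and> (\<exists>E\<in>contr F X. a \<in> E \<and> b \<in> E))\<^sup>*\<^sup>* i j0"
      using c2 X(2) unfolding hconnected_def by blast
    show "axis i 1 - axis j0 1 \<in> Dset ?T ?a" by (rule rel_closure[where R="\<lambda>a b. a \<in> - X \<and> b \<in> - X \<and> (\<exists>E\<in>contr F X. a \<in> E \<and> b \<in> E)", OF sub RC hh])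
  qed
  have lower: "{y. phi X y = phi X ?a} \<inter> {y. phi (- X) y = phi (- X) ?a} \<subseteq> affine hull ?T"
    by (rule lower2[OF a_in X(1) _ inX inC]) (use X in auto)
  have "int DIM(real^'n) - 2 = aff_dim ({y. phi X y = phi X ?a} \<inter> {y. phi (- X) y = phi (- X) ?a})"
    using aff2[OF X] by simp
  also have "\<dots> \<le> aff_dim (affine hull ?T)" by (rule aff_dim_subset[OF lower])
  finally have ge: "int DIM(real^'n) - 2 \<le> aff_dim ?T" by simp
  have upper: "?T \<subseteq> {y. phi X y = real (card (restr F X))} \<inter> {y. phi (- X) y = real (card F) - real (card (restr F X))}"
    using const_cX by auto
  have "aff_dim ?T \<le> aff_dim ({y. phi X y = real (card (restr F X))} \<inter> {y::real^'n. phi (- X) y = real (card F) - real (card (restr F X))})"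
    by (rule aff_dim_subset[OF upper])
  also have "\<dots> = int DIM(real^'n) - 2" using aff2[OF X] by simp
  finally show ?thesis using ge a_in by auto
qed

lemma T3:
  fixes F :: "'n::finite set set"
  assumes ne: "{} \<notin> F" and conn: "hconnected UNIV F"
  shows "aff_dim (hpoly F) = int DIM(real^'n) - 1"
proof -
  define q :: "'n set \<Rightarrow> real^'n" where "q A = axis (SOME i. i \<in> A) (1::real)" for A
  have qs: "q A \<in> simplex_of A" if "A \<in> F" for A
  proof -
    have "\<exists>i. i \<in> A" using that ne by (metis ex_in_conv)
    then have "(SOME i. i \<in> A) \<in> A" by (rule someI_ex)
    then show ?thesis unfolding q_def by (rule axis_simplex)
  qed
  let ?T = "hpoly F"
  have mp_in: "sum (\<lambda>B. if B = E then axis i 1 else q B) F \<in> ?T" if "E \<in> F" "i \<in> E" for E i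
  proof (rule sum_in_hpoly)
    fix A assume A: "A \<in> F"
    show "(if A = E then axis i 1 else q A) \<in> simplex_of A"
      using qs[OF A] axis_simplex[OF that(2)] by (cases "A = E") simp_all
  qed
  have a_in: "sum q F \<in> ?T" by (rule sum_in_hpoly) (erule qs)
  let ?a = "sum q F"
  have sub: "subspace (Dset ?T ?a)" by (rule D_subspace[OF a_in])
  have R: "axis a 1 - axis b 1 \<in> Dset ?T ?a"
    if h: "a \<in> UNIV \<and> b \<in> UNIV \<and> (\<exists>E\<in>F. a \<in> E \<and> b \<in> E)" for a b
  proof -
    obtain E where E: "E \<in> F" "a \<in> E" "b \<in> E" using h by blast
    show ?thesis
      using D_diff[OF a_in mp_in[OF E(1,2)] mp_in[OF E(1,3)]] mp_diff_gen[OF E(1), of "axis a 1" q "axis b 1"]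
      by simp
  qed
  have all: "axis i 1 - axis j 1 \<in> Dset ?T ?a" for i j
  proof -
    have hh: "(\<lambda>a b. a \<in> UNIV \<and> b \<in> UNIV \<and> (\<exists>E\<in>F. a \<in> E \<and> b \<in> E))\<^sup>*\<^sup>* i j"
      using conn unfolding hconnected_def by blast
    show ?thesis by (rule rel_closure[where R="\<lambda>a b. a \<in> UNIV \<and> b \<in> UNIV \<and> (\<exists>E\<in>F. a \<in> E \<and> b \<in> E)", OF sub R hh])
  qed
  have lower: "{y. phi UNIV y = phi UNIV ?a} \<subseteq> affine hull ?T" by (rule lower1[OF a_in all])
  have "int DIM(real^'n) - 1 = aff_dim {y::real^'n. phi UNIV y = phi UNIV ?a}" by (simp add: aff1)
  also have "\<dots> \<le> aff_dim (affine hull ?T)" by (rule aff_dim_subset[OF lower])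
  finally have ge: "int DIM(real^'n) - 1 \<le> aff_dim ?T" by simp
  have "?T \<subseteq> {y. phi UNIV y = real (card F)}" using hpoly_UNIV by auto
  then have "aff_dim ?T \<le> aff_dim {y::real^'n. phi UNIV y = real (card F)}" by (rule aff_dim_subset)
  also have "\<dots> = int DIM(real^'n) - 1" by (rule aff1)
  finally show ?thesis using ge by simp
qed

theorem mainTheorem8:
  fixes F :: "'n::finite set set"
  assumes "{} \<notin> F"
    and "hconnected UNIV F"
  shows "(tight F \<longleftrightarrow> (\<forall>X \<in> building_closure F - {UNIV}.
            hconnected X (restr F X) \<and> hconnected (UNIV - X) (contr F X)))
         \<and> (\<forall>X \<in> building_closure F. hconnected X (restr F X))"
proof -
  have P: "aff_dim (hpoly F) = int DIM(real^'n) - 1" by (rule T3[OF assms])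
  have part2: "\<forall>X \<in> building_closure F. hconnected X (restr F X)"
    using closure_conn assms(1) by blast
  have "tight F \<longleftrightarrow> (\<forall>X \<in> building_closure F - {UNIV}.
            hconnected X (restr F X) \<and> hconnected (UNIV - X) (contr F X))"
  proof
    assume t: "tight F"
    show "\<forall>X \<in> building_closure F - {UNIV}. hconnected X (restr F X) \<and> hconnected (UNIV - X) (contr F X)"
    proof (rule ballI, rule ccontr)
      fix X assume XB: "X \<in> building_closure F - {UNIV}"
        and nc: "\<not> (hconnected X (restr F X) \<and> hconnected (UNIV - X) (contr F X))"
      have Xne: "X \<noteq> {}" using bset_nonempty[OF assms(1)] XB by blast
      have XU: "X \<noteq> UNIV" using XB by blast
      have "\<not> (hconnected X (restr F X) \<and> hconnected (- X) (contr F X))"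
        using nc by (simp add: Compl_eq_Diff_UNIV)
      then have le: "aff_dim (fc F X) \<le> int DIM(real^'n) - 3" by (rule T5[OF Xne XU])
      have "fc F X facet_of hpoly F" using t XB unfolding tight_def by blast
      then have "aff_dim (fc F X) = int DIM(real^'n) - 2" using P unfolding facet_of_def by simp
      then show False using le by simp
    qed
  next
    assume h: "\<forall>X \<in> building_closure F - {UNIV}. hconnected X (restr F X) \<and> hconnected (UNIV - X) (contr F X)"
    show "tight F" unfolding tight_def
    proof
      fix X assume XB: "X \<in> building_closure F - {UNIV}"
      obtain i0 where i0: "i0 \<in> X" using bset_nonempty[OF assms(1)] XB by blast
      obtain j0 where j0: "j0 \<notin> X" using XB by blast
      have c1: "hconnected X (restr F X)" and c2: "hconnected (- X) (contr F X)"
        using h XB by (auto simp: Compl_eq_Diff_UNIV)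
      have T: "aff_dim (fc F X) = int DIM(real^'n) - 2 \<and> fc F X \<noteq> {}"
        by (rule T4[OF assms(1) i0 j0 c1 c2])
      show "fc F X facet_of hpoly F"
        unfolding facet_of_def using face_face[of F X] T P by simp
    qed
  qed
  with part2 show ?thesis by blast
qed

end
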